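(* Let $\tilde f>0$, $\tilde\vartheta>0$ satisfy $\tilde f/\tilde\vartheta>D/V$, and define $\tilde\sigma(\mathbf{x})=\mathbb{I}(\rho(\mathbf{x})>0)\,\tilde f+\frac{\tilde f}{\xi\tilde\vartheta}\theta(\mathbf{x})$ and $\tilde\pi(\mathbf{x})=-(f(\mathbf{x})+\tilde\sigma(\mathbf{x}))$. For all $\mathbf{x}_1,\mathbf{x}_2\in S$, with $y=f(\mathbf{x}_1)-f(\mathbf{x}_2)$ and $z=\theta(\mathbf{x}_1)-\theta(\mathbf{x}_2)$: (i) if one of (A1)–(A4) holds, then $\tilde\pi(\mathbf{x}_1)>\tilde\pi(\mathbf{x}_2)$; (ii) if one of (B1)–(B4) holds, then $\tilde\pi(\mathbf{x}_1)<\tilde\pi(\mathbf{x}_2)$. Here (A1) $-2V\le z<-V$; (A2) $-V\le z<-\xi V$; (A3) $-\xi V\le z<-\xi\eta V$ and $-D\le y\le\eta D$; (A4) $-\xi\eta V\le z\le0$, $-D\le y\le0$, $(y,z)\ne(0,0)$; (B1) $V<z\le2V$; (B2) $\xi V<z\le V$; (B3) $\xi\eta V<z\le\xi V$ and $-\eta D\le y\le D$; (B4) $0\le z\le\xi\eta V$, $0\le y\le D$, $(y,z)\ne(0,0)$.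
   Context: Let $S\subset\mathbb{R}^k$ be a compact box, $f,g_1,\dots,g_m,h_{m+1},\dots,h_n:S\to\mathbb{R}$ continuous, $\delta>0$. Put $v_i(\mathbf{x})=\max\{g_i(\mathbf{x}),0\}$ ($i\le m$), $v_i(\mathbf{x})=\max\{|h_i(\mathbf{x})|-\delta,0\}$ ($m<i\le n$), $\vartheta(\mathbf{x})=\sum_{i=1}^n v_i(\mathbf{x})$; $\mathbf{x}$ is feasible iff $\vartheta(\mathbf{x})=0$. Let $D=\max_S f-\min_S f$ and $V=\max_S\vartheta$, and assume $D>0$, $V>0$. Define $\theta(\mathbf{x})=-V$ if $\vartheta(\mathbf{x})=0$ and $\theta(\mathbf{x})=\vartheta(\mathbf{x})$ otherwise. Let $\rho(\mathbf{x})=\#\{i: v_i(\mathbf{x})>0\}$ and $\mathbb{I}(\rho(\mathbf{x})>0)$ be $1$ if $\rho(\mathbf{x})>0$ and $0$ otherwise. Fix parameters $0<\eta<1$ and $0<\xi\le 1$. *)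

theory Defs
  imports "HOL-Analysis.Analysis"
begin

text \<open>Constraint violations: indices 1..m are inequality constraints g i \<le> 0,
  indices m+1..n are equality constraints h i = 0 relaxed to |h i| \<le> delta.\<close>
definition viol :: "(nat \<Rightarrow> 'a \<Rightarrow> real) \<Rightarrow> (nat \<Rightarrow> 'a \<Rightarrow> real) \<Rightarrow> real \<Rightarrow> nat \<Rightarrow> nat \<Rightarrow> 'a \<Rightarrow> real" where
  "viol g h \<delta> m i x = (if i \<le> m then max (g i x) 0 else max (\<bar>h i x\<bar> - \<delta>) 0)"

definition tviol :: "(nat \<Rightarrow> 'a \<Rightarrow> real) \<Rightarrow> (nat \<Rightarrow> 'a \<Rightarrow> real) \<Rightarrow> real \<Rightarrow> nat \<Rightarrow> nat \<Rightarrow> 'a \<Rightarrow> real" where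
  "tviol g h \<delta> m n x = (\<Sum>i\<in>{1..n}. viol g h \<delta> m i x)"

definition nviol :: "(nat \<Rightarrow> 'a \<Rightarrow> real) \<Rightarrow> (nat \<Rightarrow> 'a \<Rightarrow> real) \<Rightarrow> real \<Rightarrow> nat \<Rightarrow> nat \<Rightarrow> 'a \<Rightarrow> nat" where
  "nviol g h \<delta> m n x = card {i\<in>{1..n}. viol g h \<delta> m i x > 0}"

definition theta_fun :: "(nat \<Rightarrow> 'a \<Rightarrow> real) \<Rightarrow> (nat \<Rightarrow> 'a \<Rightarrow> real) \<Rightarrow> real \<Rightarrow> nat \<Rightarrow> nat \<Rightarrow> real \<Rightarrow> 'a \<Rightarrow> real" where
  "theta_fun g h \<delta> m n V x = (if tviol g h \<delta> m n x = 0 then - V else tviol g h \<delta> m n x)"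

definition sigma_t :: "(nat \<Rightarrow> 'a \<Rightarrow> real) \<Rightarrow> (nat \<Rightarrow> 'a \<Rightarrow> real) \<Rightarrow> real \<Rightarrow> nat \<Rightarrow> nat \<Rightarrow> real
     \<Rightarrow> real \<Rightarrow> real \<Rightarrow> real \<Rightarrow> 'a \<Rightarrow> real" where
  "sigma_t g h \<delta> m n V \<xi> ft vt x =
     (if nviol g h \<delta> m n x > 0 then 1 else 0) * ft + ft / (\<xi> * vt) * theta_fun g h \<delta> m n V x"

definition pi_t :: "('a \<Rightarrow> real) \<Rightarrow> (nat \<Rightarrow> 'a \<Rightarrow> real) \<Rightarrow> (nat \<Rightarrow> 'a \<Rightarrow> real) \<Rightarrow> real \<Rightarrow> nat \<Rightarrow> nat \<Rightarrow> real
     \<Rightarrow> real \<Rightarrow> real \<Rightarrow> real \<Rightarrow> 'a \<Rightarrow> real" where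
  "pi_t f g h \<delta> m n V \<xi> ft vt x = - (f x + sigma_t g h \<delta> m n V \<xi> ft vt x)"

end

theory Submission imports Defs begin
lemma core:
  fixes c \<xi> \<eta> V D y t1 t2 ft :: real
  assumes c: "c>0" and xi: "0<\<xi>" "\<xi>\<le>1" and eta: "0<\<eta>" "\<eta><1" and V: "V>0" and D: "D>0"
    and K: "c*\<xi>*V > D" and y: "\<bar>y\<bar> \<le> D" and ft: "ft \<ge> 0"
    and t1: "0\<le>t1" "t1\<le>V" and t2: "0\<le>t2" "t2\<le>V"
  defines "z \<equiv> (if t1 = 0 then -V else t1) - (if t2 = 0 then -V else t2)"
  defines "P \<equiv> y + ((if t1>0 then 1 else 0)*ft - (if t2>0 then 1 else 0)*ft) + c*z"
  shows "((-2*V \<le> z \<and> z < -V)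
         \<or> (-V \<le> z \<and> z < -\<xi>*V)
         \<or> (-\<xi>*V \<le> z \<and> z < -\<xi>*\<eta>*V \<and> -D \<le> y \<and> y \<le> \<eta>*D)
         \<or> (-\<xi>*\<eta>*V \<le> z \<and> z \<le> 0 \<and> -D \<le> y \<and> y \<le> 0 \<and> (y, z) \<noteq> (0, 0))
         \<longrightarrow> P < 0)
      \<and> ((V < z \<and> z \<le> 2*V)
         \<or> (\<xi>*V < z \<and> z \<le> V)
         \<or> (\<xi>*\<eta>*V < z \<and> z \<le> \<xi>*V \<and> -\<eta>*D \<le> y \<and> y \<le> D)
         \<or> (0 \<le> z \<and> z \<le> \<xi>*\<eta>*V \<and> 0 \<le> y \<and> y \<le> D \<and> (y, z) \<noteq> (0, 0))
         \<longrightarrow> P > 0)"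
proof -
  have m1: "\<And>u w. u < w \<Longrightarrow> c*u < c*w" using c by simp
  have m2: "\<And>u w. u \<le> w \<Longrightarrow> c*u \<le> c*w" using c by simp
  have xe: "\<xi>*\<eta> \<le> 1" using xi eta by (simp add: mult_le_one)
  have xev: "\<xi>*\<eta>*V \<le> V" using xe V by simp
  have xv: "\<xi>*V \<le> V" using xi V by simp
  have K1: "c*V \<ge> c*\<xi>*V" using m2[OF xv] by (simp add: mult.assoc)
  have K2: "c*(\<xi>*\<eta>*V) = \<eta>*(c*\<xi>*V)" by simp
  have K3: "\<eta>*(c*\<xi>*V) > \<eta>*D" using K eta by simp
  have pos: "\<xi>*V > 0" "\<xi>*\<eta>*V > 0" using xi eta V by auto
  have Kc: "c*(\<xi>*V) = c*\<xi>*V" by simp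
  show ?thesis
  proof (intro conjI impI)
    assume A: "(-2*V \<le> z \<and> z < -V)
         \<or> (-V \<le> z \<and> z < -\<xi>*V)
         \<or> (-\<xi>*V \<le> z \<and> z < -\<xi>*\<eta>*V \<and> -D \<le> y \<and> y \<le> \<eta>*D)
         \<or> (-\<xi>*\<eta>*V \<le> z \<and> z \<le> 0 \<and> -D \<le> y \<and> y \<le> 0 \<and> (y, z) \<noteq> (0, 0))"
    then consider "z < -V" | "-V \<le> z" "z < -\<xi>*V" | "-V \<le> z" "z < -\<xi>*\<eta>*V" "y \<le> \<eta>*D"
      | "-V \<le> z" "z \<le> 0" "y \<le> 0" "(y,z) \<noteq> (0,0)" using xv xev by force
    then show "P < 0"
    proof cases
      case 1
      then have "c*z < c*(-V)" by (rule m1)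
      then show ?thesis using 1 K pos Kc t1 t2 y K1 ft V unfolding P_def z_def by (auto split: if_splits)
    next
      case 2
      then have "c*z < c*(-(\<xi>*V))" using m1[of z "-(\<xi>*V)"] by simp
      then show ?thesis using 2 K pos Kc t1 t2 y K ft V unfolding P_def z_def by (auto split: if_splits)
    next
      case 3
      then have "c*z < c*(-(\<xi>*\<eta>*V))" using m1[of z "-(\<xi>*\<eta>*V)"] by simp
      then show ?thesis using 3 K pos Kc t1 t2 y K3 K2 ft V unfolding P_def z_def by (auto split: if_splits)
    next
      case 4
      then have "c*z \<le> 0" using c by (simp add: mult_nonneg_nonpos)
      moreover have "z < 0 \<Longrightarrow> c*z < 0" using c by (simp add: mult_pos_neg)
      ultimately show ?thesis using 4 K pos Kc t1 t2 ft V unfolding P_def z_def by (auto split: if_splits)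
    qed
  next
    assume B: "(V < z \<and> z \<le> 2*V)
         \<or> (\<xi>*V < z \<and> z \<le> V)
         \<or> (\<xi>*\<eta>*V < z \<and> z \<le> \<xi>*V \<and> -\<eta>*D \<le> y \<and> y \<le> D)
         \<or> (0 \<le> z \<and> z \<le> \<xi>*\<eta>*V \<and> 0 \<le> y \<and> y \<le> D \<and> (y, z) \<noteq> (0, 0))"
    then consider "z > V" | "z \<le> V" "z > \<xi>*V" | "z \<le> V" "z > \<xi>*\<eta>*V" "y \<ge> -\<eta>*D"
      | "z \<le> V" "z \<ge> 0" "y \<ge> 0" "(y,z) \<noteq> (0,0)" using xv xev by force
    then show "P > 0"
    proof cases
      case 1
      then have "c*z > c*V" by (rule m1)
      then show ?thesis using 1 K pos Kc t1 t2 y K1 ft V unfolding P_def z_def by (auto split: if_splits)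
    next
      case 2
      then have "c*z > c*(\<xi>*V)" using m1[of "\<xi>*V" z] by simp
      then show ?thesis using 2 K pos Kc t1 t2 y K ft V unfolding P_def z_def by (auto split: if_splits)
    next
      case 3
      then have "c*z > c*(\<xi>*\<eta>*V)" using m1[of "\<xi>*\<eta>*V" z] by simp
      then show ?thesis using 3 K pos Kc t1 t2 y K3 K2 ft V unfolding P_def z_def by (auto split: if_splits)
    next
      case 4
      then have "c*z \<ge> 0" using c by simp
      moreover have "z > 0 \<Longrightarrow> c*z > 0" using c by simp
      ultimately show ?thesis using 4 K pos Kc t1 t2 ft V unfolding P_def z_def by (auto split: if_splits)
    qed
  qed
qed
theorem mainTheorem8:
  fixes a b :: "'a::euclidean_space"
    and f :: "'a \<Rightarrow> real" and g h :: "nat \<Rightarrow> 'a \<Rightarrow> real"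
    and m n :: nat and \<delta> \<eta> \<xi> ft vt :: real
  defines "S \<equiv> cbox a b"
  defines "D \<equiv> Sup (f ` S) - Inf (f ` S)"
  defines "V \<equiv> Sup (tviol g h \<delta> m n ` S)"
  assumes "m \<le> n"
    and "continuous_on S f"
    and "\<forall>i\<in>{1..m}. continuous_on S (g i)"
    and "\<forall>i\<in>{m+1..n}. continuous_on S (h i)"
    and "\<delta> > 0" and "D > 0" and "V > 0"
    and "0 < \<eta>" and "\<eta> < 1" and "0 < \<xi>" and "\<xi> \<le> 1"
    and "ft > 0" and "vt > 0" and "ft / vt > D / V"
  shows "\<forall>x1\<in>S. \<forall>x2\<in>S.
    (let y = f x1 - f x2;
         z = theta_fun g h \<delta> m n V x1 - theta_fun g h \<delta> m n V x2;
         \<pi> = pi_t f g h \<delta> m n V \<xi> ft vt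
     in ((-2*V \<le> z \<and> z < -V)
         \<or> (-V \<le> z \<and> z < -\<xi>*V)
         \<or> (-\<xi>*V \<le> z \<and> z < -\<xi>*\<eta>*V \<and> -D \<le> y \<and> y \<le> \<eta>*D)
         \<or> (-\<xi>*\<eta>*V \<le> z \<and> z \<le> 0 \<and> -D \<le> y \<and> y \<le> 0 \<and> (y, z) \<noteq> (0, 0))
         \<longrightarrow> \<pi> x1 > \<pi> x2)
      \<and> ((V < z \<and> z \<le> 2*V)
         \<or> (\<xi>*V < z \<and> z \<le> V)
         \<or> (\<xi>*\<eta>*V < z \<and> z \<le> \<xi>*V \<and> -\<eta>*D \<le> y \<and> y \<le> D)
         \<or> (0 \<le> z \<and> z \<le> \<xi>*\<eta>*V \<and> 0 \<le> y \<and> y \<le> D \<and> (y, z) \<noteq> (0, 0))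
         \<longrightarrow> \<pi> x1 < \<pi> x2))"
proof -
  have tv_nonneg: "\<And>x. tviol g h \<delta> m n x \<ge> 0"
    unfolding tviol_def viol_def by (intro sum_nonneg) auto
  have nv: "\<And>x. (nviol g h \<delta> m n x > 0) \<longleftrightarrow> (tviol g h \<delta> m n x > 0)"
  proof -
    fix x
    have nn: "\<forall>i\<in>{1..n}. viol g h \<delta> m i x \<ge> 0" unfolding viol_def by auto
    have "(nviol g h \<delta> m n x > 0) \<longleftrightarrow> (\<exists>i\<in>{1..n}. viol g h \<delta> m i x > 0)"
      unfolding nviol_def by (subst card_gt_0_iff) auto
    also have "\<dots> \<longleftrightarrow> (tviol g h \<delta> m n x > 0)"
    proof
      assume "\<exists>i\<in>{1..n}. viol g h \<delta> m i x > 0"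
      then obtain i where "i\<in>{1..n}" "viol g h \<delta> m i x > 0" by blast
      then show "tviol g h \<delta> m n x > 0" unfolding tviol_def
        using nn by (intro sum_pos2[of "{1..n}" i]) auto
    next
      assume "tviol g h \<delta> m n x > 0"
      then show "\<exists>i\<in>{1..n}. viol g h \<delta> m i x > 0" unfolding tviol_def
        using nn by (metis less_eq_real_def sum_nonpos not_le)
    qed
    finally show "(nviol g h \<delta> m n x > 0) \<longleftrightarrow> (tviol g h \<delta> m n x > 0)" .
  qed
  have cS: "compact S" unfolding S_def by simp
  have ctv: "continuous_on S (tviol g h \<delta> m n)"
    unfolding tviol_def
  proof (intro continuous_on_sum ballI)
    fix i assume i: "i \<in> {1..n}"
    show "continuous_on S (viol g h \<delta> m i)"
    proof (cases "i \<le> m")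
      case True
      then have "continuous_on S (g i)" using assms(6) i by auto
      then show ?thesis using True unfolding viol_def by (auto intro!: continuous_intros)
    next
      case False
      then have "continuous_on S (h i)" using assms(7) i by auto
      then show ?thesis using False unfolding viol_def by (auto intro!: continuous_intros)
    qed
  qed
  have bt: "bdd_above (tviol g h \<delta> m n ` S)"
    by (intro bounded_imp_bdd_above compact_imp_bounded compact_continuous_image ctv cS)
  have tvV: "\<And>x. x \<in> S \<Longrightarrow> tviol g h \<delta> m n x \<le> V"
    unfolding V_def using bt by (intro cSup_upper) auto
  have bfa: "bdd_above (f ` S)" and bfb: "bdd_below (f ` S)"
    by (intro bounded_imp_bdd_above bounded_imp_bdd_below compact_imp_bounded compact_continuous_image assms(5) cS)+
  have fD: "\<And>x1 x2. x1 \<in> S \<Longrightarrow> x2 \<in> S \<Longrightarrow> \<bar>f x1 - f x2\<bar> \<le> D"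
  proof -
    fix x1 x2 assume "x1 \<in> S" "x2 \<in> S"
    then have "f x1 \<le> Sup (f ` S)" "f x2 \<le> Sup (f ` S)" "Inf (f ` S) \<le> f x1" "Inf (f ` S) \<le> f x2"
      using bfa bfb by (auto intro!: cSup_upper cInf_lower)
    then show "\<bar>f x1 - f x2\<bar> \<le> D" unfolding D_def by linarith
  qed
  define c where "c = ft / (\<xi> * vt)"
  have c: "c > 0" unfolding c_def using assms by simp
  have cK: "c*\<xi>*V = ft/vt*V" unfolding c_def using assms by (simp add: field_simps)
  have "D < ft/vt*V" using assms(17) assms(10) by (simp add: pos_divide_less_eq)
  then have K: "c*\<xi>*V > D" using cK by simp
  show ?thesis
  proof (intro ballI)
    fix x1 x2 assume x1: "x1 \<in> S" and x2: "x2 \<in> S"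
    define t1 where "t1 = tviol g h \<delta> m n x1"
    define t2 where "t2 = tviol g h \<delta> m n x2"
    have t1b: "0 \<le> t1" "t1 \<le> V" unfolding t1_def using tv_nonneg tvV x1 by auto
    have t2b: "0 \<le> t2" "t2 \<le> V" unfolding t2_def using tv_nonneg tvV x2 by auto
    note C = core[OF c assms(13) assms(14) assms(11) assms(12) assms(10) assms(9) K fD[OF x1 x2] less_imp_le[OF assms(15)] t1b t2b]
    have th1: "theta_fun g h \<delta> m n V x1 = (if t1 = 0 then -V else t1)" unfolding theta_fun_def t1_def ..
    have th2: "theta_fun g h \<delta> m n V x2 = (if t2 = 0 then -V else t2)" unfolding theta_fun_def t2_def ..
    have pi1: "pi_t f g h \<delta> m n V \<xi> ft vt x1 = -(f x1 + (if t1>0 then 1 else 0)*ft + c*(if t1 = 0 then -V else t1))"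
      unfolding pi_t_def sigma_t_def th1 c_def using nv[of x1] unfolding t1_def by simp
    have pi2: "pi_t f g h \<delta> m n V \<xi> ft vt x2 = -(f x2 + (if t2>0 then 1 else 0)*ft + c*(if t2 = 0 then -V else t2))"
      unfolding pi_t_def sigma_t_def th2 c_def using nv[of x2] unfolding t2_def by simp
    show "let y = f x1 - f x2;
         z = theta_fun g h \<delta> m n V x1 - theta_fun g h \<delta> m n V x2;
         \<pi> = pi_t f g h \<delta> m n V \<xi> ft vt
     in ((-2*V \<le> z \<and> z < -V)
         \<or> (-V \<le> z \<and> z < -\<xi>*V)
         \<or> (-\<xi>*V \<le> z \<and> z < -\<xi>*\<eta>*V \<and> -D \<le> y \<and> y \<le> \<eta>*D)
         \<or> (-\<xi>*\<eta>*V \<le> z \<and> z \<le> 0 \<and> -D \<le> y \<and> y \<le> 0 \<and> (y, z) \<noteq> (0, 0))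
         \<longrightarrow> \<pi> x1 > \<pi> x2)
      \<and> ((V < z \<and> z \<le> 2*V)
         \<or> (\<xi>*V < z \<and> z \<le> V)
         \<or> (\<xi>*\<eta>*V < z \<and> z \<le> \<xi>*V \<and> -\<eta>*D \<le> y \<and> y \<le> D)
         \<or> (0 \<le> z \<and> z \<le> \<xi>*\<eta>*V \<and> 0 \<le> y \<and> y \<le> D \<and> (y, z) \<noteq> (0, 0))
         \<longrightarrow> \<pi> x1 < \<pi> x2)"
      unfolding Let_def th1 th2 pi1 pi2 using C by (simp add: right_diff_distrib algebra_simps)
  qed
qed
end
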